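(* For every integer $n\ge0$ with $n\ne3$ we have $\tilde b(TP_n)\le 2^{n/4}$. Furthermore $\tilde b(TP_3)=2$.
   Context: The triangular path $TP_n$ is the graph with vertex set $[n]$ in which $i\ne j$ are adjacent iff $|i-j|\le2$; $TP_0$ is the empty graph. $\mathrm{Ind}(G)$ is the independence complex of $G$ (including the empty face), and $\tilde b(G)=\sum_{i\ge-1}\dim_{\mathbb{K}}\widetilde H_i(\mathrm{Ind}(G);\mathbb{K})$ for a fixed field $\mathbb{K}$. *)

theory Defs
  imports Complex_Main "HOL-Library.Function_Algebras"
begin

definition tp_adj :: "nat \<Rightarrow> nat \<Rightarrow> bool" where
  "tp_adj i j = (i \<noteq> j \<and> \<bar>int i - int j\<bar> \<le> 2)"

text \<open>Triangular path TP_n: vertex set {1..n}, adjacency tp_adj.\<close>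

definition indep_complex :: "nat set \<Rightarrow> (nat \<Rightarrow> nat \<Rightarrow> bool) \<Rightarrow> nat set set" where
  "indep_complex V E = {S. S \<subseteq> V \<and> (\<forall>x\<in>S. \<forall>y\<in>S. \<not> E x y)}"

text \<open>Chains of a simplicial complex F (a set of finite vertex sets, including the
empty face) with coefficients in a field: functions supported on faces with k vertices,
i.e. the augmented chain group in degree k-1. Simplices are oriented by the order on nat.\<close>

definition chains :: "nat set set \<Rightarrow> nat \<Rightarrow> (nat set \<Rightarrow> 'k::field) set" where
  "chains F k = {f. \<forall>\<sigma>. f \<sigma> \<noteq> 0 \<longrightarrow> \<sigma> \<in> F \<and> card \<sigma> = k}"

text \<open>Augmented simplicial boundary:
  d[v_0<...<v_k] = sum_i (-1)^i [v_0..^v_i..v_k], with d[v] = [empty].\<close>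

definition bd :: "nat set set \<Rightarrow> (nat set \<Rightarrow> 'k::field) \<Rightarrow> (nat set \<Rightarrow> 'k)" where
  "bd F f \<tau> = (\<Sum>v\<in>{v. v \<notin> \<tau> \<and> insert v \<tau> \<in> F}.
       (-1) ^ card {u\<in>\<tau>. u < v} * f (insert v \<tau>))"

definition fscale :: "'k::field \<Rightarrow> (nat set \<Rightarrow> 'k) \<Rightarrow> (nat set \<Rightarrow> 'k)" where
  "fscale c f = (\<lambda>x. c * f x)"

text \<open>dim_K of the reduced homology group H~_{k-1}(F;K) = ker d_k / im d_{k+1}.\<close>

definition red_betti :: "'k::field itself \<Rightarrow> nat set set \<Rightarrow> nat \<Rightarrow> nat" where
  "red_betti _ F k =
     vector_space.dim (fscale :: 'k \<Rightarrow> _) {f \<in> (chains F k :: (nat set \<Rightarrow> 'k) set). bd F f = 0}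
     - vector_space.dim (fscale :: 'k \<Rightarrow> _) (bd F ` (chains F (Suc k) :: (nat set \<Rightarrow> 'k) set))"

text \<open>b~(G) = sum over i >= -1 of dim H~_i(Ind G; K). Faces have at most card V
vertices, so degrees k-1 with k \<le> card V exhaust all nonzero groups.\<close>

definition total_red_betti :: "'k::field itself \<Rightarrow> nat set \<Rightarrow> (nat \<Rightarrow> nat \<Rightarrow> bool) \<Rightarrow> nat" where
  "total_red_betti K V E = (\<Sum>k\<in>{0..card V}. red_betti K (indep_complex V E) k)"

end

theory Submission
  imports Defs
begin


context vector_space begin

lemma dim_mono_fd:
  assumes "S \<subseteq> T" "T \<subseteq> span W" "finite W"
  shows "dim S \<le> dim T"
proof -
  obtain A where A: "A \<subseteq> S" "independent A" "S \<subseteq> span A" "card A = dim S"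
    by (rule basis_exists)
  obtain B where B: "B \<subseteq> T" "independent B" "T \<subseteq> span B" "card B = dim T"
    by (rule basis_exists)
  have fB: "finite B" using independent_span_bound[OF assms(3) B(2)] B(1) assms(2) by blast
  have "A \<subseteq> span B" using A(1) assms(1) B(3) by blast
  then have "card A \<le> card B" using independent_span_bound[OF fB A(2)] by blast
  then show ?thesis using A B by simp
qed

lemma card_le_dim_fd:
  assumes "independent I" "I \<subseteq> X" "X \<subseteq> span W" "finite W"
  shows "card I \<le> dim X"
proof -
  obtain B where B: "B \<subseteq> X" "independent B" "X \<subseteq> span B" "card B = dim X"
    by (rule basis_exists)
  have fB: "finite B" using independent_span_bound[OF assms(4) B(2)] B(1) assms(3) by blast
  have "I \<subseteq> span B" using assms(2) B(3) by blast
  then have "card I \<le> card B" using independent_span_bound[OF fB assms(1)] by blast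
  then show ?thesis using B by simp
qed

lemma ext_basis_fd:
  assumes "subspace B" "B \<subseteq> Z" "Z \<subseteq> span W" "finite W"
  obtains h where "finite h" "h \<subseteq> Z" "card h = dim Z - dim B"
    "\<And>z. z \<in> Z \<Longrightarrow> \<exists>b\<in>B. z - b \<in> span h"
proof -
  obtain A where A: "A \<subseteq> B" "independent A" "B \<subseteq> span A" "card A = dim B"
    by (rule basis_exists)
  obtain C where C: "A \<subseteq> C" "C \<subseteq> Z" "independent C" "Z \<subseteq> span C"
    using maximal_independent_subset_extend[of A Z] A assms(2) by blast
  have fC: "finite C" using independent_span_bound[OF assms(4) C(3)] C(2) assms(3) by blast
  have cC: "card C = dim Z" using basis_card_eq_dim[OF C(2) C(4) C(3)] .
  have fA: "finite A" using fC C(1) finite_subset by blast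
  let ?h = "C - A"
  have "card ?h = dim Z - dim B" using card_Diff_subset[OF fA C(1)] cC A(4) by simp
  moreover have "\<exists>b\<in>B. z - b \<in> span ?h" if z: "z \<in> Z" for z
  proof -
    have "C = A \<union> ?h" using C(1) by blast
    then have "z \<in> span (A \<union> ?h)" using z C(4) by auto
    then obtain x y where xy: "z = x + y" "x \<in> span A" "y \<in> span ?h" unfolding span_Un by blast
    have "x \<in> B" using xy(2) span_minimal[OF A(1) assms(1)] by blast
    then show ?thesis using xy by (intro bexI[of _ x]) (auto simp: algebra_simps)
  qed
  ultimately show ?thesis using that fC C(2) by (meson finite_Diff Diff_subset order_trans)
qed

lemma dim_sum_le_fd:
  assumes "\<And>x. x \<in> X \<Longrightarrow> \<exists>b\<in>B. x - b \<in> span H" "finite H" "B \<subseteq> span W" "finite W"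
  shows "dim X \<le> dim B + card H"
proof -
  obtain A where A: "A \<subseteq> B" "independent A" "B \<subseteq> span A" "card A = dim B"
    by (rule basis_exists)
  have fA: "finite A" using independent_span_bound[OF assms(4) A(2)] A(1) assms(3) by blast
  have "X \<subseteq> span (A \<union> H)"
  proof
    fix x assume "x \<in> X"
    then obtain b where b: "b \<in> B" "x - b \<in> span H" using assms(1) by blast
    have "b \<in> span (A \<union> H)" using b(1) A(3) span_mono[of A "A \<union> H"] by blast
    moreover have "x - b \<in> span (A \<union> H)" using b(2) span_mono[of H "A \<union> H"] by blast
    ultimately have "b + (x - b) \<in> span (A \<union> H)" by (rule span_add)
    then show "x \<in> span (A \<union> H)" by simp
  qed
  then have "dim X \<le> card (A \<union> H)" using dim_le_card fA assms(2) by blast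
  also have "\<dots> \<le> card A + card H" by (rule card_Un_le)
  finally show ?thesis using A by simp
qed

end

lemma fscale_vs: "vector_space (fscale :: 'k::field \<Rightarrow> (nat set \<Rightarrow> 'k) \<Rightarrow> _)"
  by unfold_locales (auto simp: fscale_def algebra_simps fun_eq_iff)

interpretation fs: vector_space "fscale :: 'k::field \<Rightarrow> (nat set \<Rightarrow> 'k) \<Rightarrow> _"
  by (rule fscale_vs)




definition sg :: "nat set \<Rightarrow> nat \<Rightarrow> 'k::field" where
  "sg \<tau> w = (-1) ^ card {u\<in>\<tau>. u < w}"

lemma sg_sq[simp]: "sg \<tau> w * sg \<tau> w = (1::'k::field)"
  by (simp add: sg_def power_mult_distrib[symmetric])

lemma sg_insert:
  assumes "finite \<tau>" "v \<notin> \<tau>"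
  shows "(sg (insert v \<tau>) w :: 'k::field) = (if v < w then - sg \<tau> w else sg \<tau> w)"
proof (cases "v < w")
  case True
  then have "{u\<in>insert v \<tau>. u < w} = insert v {u\<in>\<tau>. u < w}" by auto
  moreover have "card (insert v {u\<in>\<tau>. u < w}) = Suc (card {u\<in>\<tau>. u < w})"
    using assms by simp
  ultimately show ?thesis using True by (simp add: sg_def)
next
  case False
  then have "{u\<in>insert v \<tau>. u < w} = {u\<in>\<tau>. u < w}" by auto
  then show ?thesis using False by (simp add: sg_def)
qed

lemma sg_swap:
  assumes "finite \<tau>" "v \<notin> \<tau>" "w \<notin> \<tau>" "v \<noteq> w"
  shows "(sg \<tau> v * sg (insert v \<tau>) w :: 'k::field) = - (sg \<tau> w * sg (insert w \<tau>) v)"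
  using assms by (cases "v < w") (auto simp: sg_insert)

lemma bd_alt: "bd F f \<tau> = (\<Sum>v\<in>{v. v \<notin> \<tau> \<and> insert v \<tau> \<in> F}. sg \<tau> v * f (insert v \<tau>))"
  by (simp add: bd_def sg_def)

definition cplx :: "nat set \<Rightarrow> nat set set \<Rightarrow> bool" where
  "cplx V F \<longleftrightarrow> finite V \<and> F \<subseteq> Pow V \<and> {} \<in> F \<and> (\<forall>\<sigma> \<tau>. \<sigma> \<in> F \<longrightarrow> \<tau> \<subseteq> \<sigma> \<longrightarrow> \<tau> \<in> F)"

lemma cplx_indep: "finite V \<Longrightarrow> cplx V (indep_complex V E)"
  by (auto simp: cplx_def indep_complex_def)

lemma cplx_fin_idx: "cplx V F \<Longrightarrow> finite {v. v \<notin> \<tau> \<and> insert v \<tau> \<in> F}"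
  unfolding cplx_def by (rule finite_subset[of _ V]) auto

lemma cplx_fin_face: "cplx V F \<Longrightarrow> \<sigma> \<in> F \<Longrightarrow> finite \<sigma>"
  unfolding cplx_def by (meson PowD finite_subset subsetD)

lemma cplx_finite: "cplx V F \<Longrightarrow> finite F"
  unfolding cplx_def by (meson finite_Pow_iff finite_subset)

lemma cplx_down: "cplx V F \<Longrightarrow> \<sigma> \<in> F \<Longrightarrow> \<tau> \<subseteq> \<sigma> \<Longrightarrow> \<tau> \<in> F"
  unfolding cplx_def by blast

lemma bd_add: "bd F (f + g) = bd F f + bd F g"
  by (simp add: fun_eq_iff bd_def algebra_simps sum.distrib)

lemma bd_scale: "bd F (fscale c f) = fscale c (bd F f)"
  by (simp add: fun_eq_iff bd_def fscale_def sum_distrib_left algebra_simps)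

lemma bd_zero[simp]: "bd F 0 = 0"
  by (simp add: fun_eq_iff bd_def)

lemma bd_minus: "bd F (- f) = - bd F f"
  by (simp add: fun_eq_iff bd_def sum_negf)

lemma bd_diff: "bd F (f - g) = bd F f - bd F g"
  by (simp add: fun_eq_iff bd_def algebra_simps sum_subtractf)

lemma chains_subspace: "fs.subspace (chains F k :: (nat set \<Rightarrow> 'k::field) set)"
  unfolding fs.subspace_def chains_def fscale_def
  by (auto, (metis add.left_neutral)+)

lemma bd_image_subspace: "fs.subspace (bd F ` (chains F k :: (nat set \<Rightarrow> 'k::field) set))"
proof -
  have S: "fs.subspace (chains F k :: (nat set \<Rightarrow> 'k::field) set)" by (rule chains_subspace)
  show ?thesis unfolding fs.subspace_def
  proof (intro conjI ballI allI)
    show "(0::nat set \<Rightarrow> 'k) \<in> bd F ` chains F k" using fs.subspace_0[OF S] by (intro image_eqI[where x=0]) auto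
  next
    fix x y :: "nat set \<Rightarrow> 'k" assume "x \<in> bd F ` chains F k" "y \<in> bd F ` chains F k"
    then obtain a b where "a \<in> chains F k" "b \<in> chains F k" "x = bd F a" "y = bd F b" by blast
    then show "x + y \<in> bd F ` chains F k"
      using fs.subspace_add[OF S] by (metis bd_add image_eqI)
  next
    fix c and x :: "nat set \<Rightarrow> 'k" assume "x \<in> bd F ` chains F k"
    then obtain a where "a \<in> chains F k" "x = bd F a" by blast
    then show "fscale c x \<in> bd F ` chains F k"
      using fs.subspace_scale[OF S] by (metis bd_scale image_eqI)
  qed
qed

lemma cycles_subspace: "fs.subspace {f \<in> (chains F k :: (nat set \<Rightarrow> 'k::field) set). bd F f = 0}"
proof -
  have S: "fs.subspace (chains F k :: (nat set \<Rightarrow> 'k::field) set)" by (rule chains_subspace)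
  show ?thesis unfolding fs.subspace_def
    using fs.subspace_0[OF S] fs.subspace_add[OF S] fs.subspace_scale[OF S]
    by (auto simp: bd_add bd_scale)
qed

definition dlt :: "nat set \<Rightarrow> nat set \<Rightarrow> 'k::field" where
  "dlt \<sigma> = (\<lambda>\<tau>. if \<tau> = \<sigma> then 1 else 0)"

lemma supp_span:
  assumes "finite F" "\<And>\<sigma>. f \<sigma> \<noteq> 0 \<Longrightarrow> \<sigma> \<in> F"
  shows "f \<in> fs.span (dlt ` F)"
  using assms
proof (induction F arbitrary: f rule: finite_induct)
  case empty
  then have "f = 0" by (auto simp: fun_eq_iff)
  then show ?case using fs.span_zero by metis
next
  case (insert x F)
  let ?g = "f(x := 0)"
  have "?g \<in> fs.span (dlt ` F)" using insert by (intro insert.IH) (force split: if_splits)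
  then have g: "?g \<in> fs.span (dlt ` insert x F)" using fs.span_mono[of "dlt ` F" "dlt ` insert x F"] by blast
  have d: "fscale (f x) (dlt x) \<in> fs.span (dlt ` insert x F)"
    by (intro fs.span_scale fs.span_base) auto
  have "f = ?g + fscale (f x) (dlt x)" by (auto simp: fun_eq_iff fscale_def dlt_def)
  then show ?case using fs.span_add[OF g d] by simp
qed

lemma chains_span: "finite F \<Longrightarrow> chains F k \<subseteq> fs.span (dlt ` F)"
  by (auto simp: chains_def intro!: supp_span)

lemma bd_chains:
  assumes "cplx V F" "f \<in> chains F (Suc k)"
  shows "bd F f \<in> chains F k"
  unfolding chains_def
proof (intro CollectI allI impI)
  fix \<tau> assume "bd F f \<tau> \<noteq> 0"
  then obtain v where v: "v \<notin> \<tau>" "insert v \<tau> \<in> F" "f (insert v \<tau>) \<noteq> 0"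
    unfolding bd_def by (metis (mono_tags, lifting) mem_Collect_eq mult_zero_right sum.neutral)
  have fin: "finite \<tau>" using cplx_fin_face[OF assms(1) v(2)] by simp
  have "card (insert v \<tau>) = Suc k" using assms(2) v(3) by (auto simp: chains_def)
  then have "card \<tau> = k" using fin v(1) by simp
  moreover have "\<tau> \<in> F" using cplx_down[OF assms(1) v(2)] by blast
  ultimately show "\<tau> \<in> F \<and> card \<tau> = k" by simp
qed



lemma bd_bd:
  assumes cx: "cplx V F"
  shows "bd F (bd F f) = (0 :: nat set \<Rightarrow> 'k::field)"
proof (rule ext)
  fix \<tau>
  define A where "A = (\<lambda>t. {v. v \<notin> t \<and> insert v t \<in> F})"
  define g where "g = (\<lambda>v w. sg \<tau> v * sg (insert v \<tau>) w * (f (insert w (insert v \<tau>)) :: 'k))"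
  define P where "P = Sigma (A \<tau>) (\<lambda>v. A (insert v \<tau>))"
  have finA: "\<And>t. finite (A t)" using cplx_fin_idx[OF cx] A_def by simp
  have mem: "(v,w) \<in> P \<longleftrightarrow> v \<notin> \<tau> \<and> w \<notin> \<tau> \<and> v \<noteq> w \<and> insert w (insert v \<tau>) \<in> F" for v w
    unfolding P_def A_def using cplx_down[OF cx, of "insert w (insert v \<tau>)" "insert v \<tau>"] by auto
  have "bd F (bd F f) \<tau> = (\<Sum>v\<in>A \<tau>. \<Sum>w\<in>A (insert v \<tau>). g v w)"
    by (simp add: bd_alt A_def g_def sum_distrib_left mult.assoc)
  also have "\<dots> = (\<Sum>p\<in>P. case_prod g p)" unfolding P_def by (rule sum.Sigma) (use finA in auto)
  also have "\<dots> = 0"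
  proof -
    define P1 where "P1 = {p\<in>P. fst p < snd p}"
    define P2 where "P2 = {p\<in>P. snd p < fst p}"
    have finP: "finite P" unfolding P_def using finA by auto
    have PU: "P = P1 \<union> P2" unfolding P1_def P2_def using mem by (auto simp: linorder_neq_iff)
    have disj: "P1 \<inter> P2 = {}" by (auto simp: P1_def P2_def)
    have swapP: "prod.swap ` P1 = P2"
    proof
      show "prod.swap ` P1 \<subseteq> P2" unfolding P1_def P2_def using mem by (auto simp: insert_commute)
      show "P2 \<subseteq> prod.swap ` P1"
      proof
        fix p assume p: "p \<in> P2"
        obtain v w where pe: "p = (v, w)" by (cases p)
        have "(w, v) \<in> P1" using p mem unfolding pe P1_def P2_def by (auto simp: insert_commute)
        then show "p \<in> prod.swap ` P1" using pe by force
      qed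
    qed
    have anti: "g w v = - g v w" if "(v,w) \<in> P1" for v w
    proof -
      have m: "v \<notin> \<tau>" "w \<notin> \<tau>" "v \<noteq> w" "insert w (insert v \<tau>) \<in> F"
        using that mem unfolding P1_def by auto
      have "finite \<tau>" using cplx_fin_face[OF cx m(4)] by simp
      then have "(sg \<tau> w * sg (insert w \<tau>) v :: 'k) = - (sg \<tau> v * sg (insert v \<tau>) w)"
        using m by (cases "v < w") (auto simp: sg_insert)
      then show ?thesis unfolding g_def by (simp add: insert_commute)
    qed
    have "sum (case_prod g) P2 = sum (case_prod g \<circ> prod.swap) P1"
      unfolding swapP[symmetric] by (rule sum.reindex) simp
    also have "\<dots> = sum (\<lambda>p. - case_prod g p) P1" by (rule sum.cong) (auto simp: anti)
    also have "\<dots> = - sum (case_prod g) P1" by (simp add: sum_negf)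
    finally have "sum (case_prod g) P2 = - sum (case_prod g) P1" .
    moreover have "sum (case_prod g) P = sum (case_prod g) P1 + sum (case_prod g) P2"
      unfolding PU by (rule sum.union_disjoint) (use finP PU disj in auto)
    ultimately show ?thesis by simp
  qed
  finally show "bd F (bd F f) \<tau> = 0 \<tau>" by simp
qed

lemma bd_sub:
  assumes cx: "cplx V F2" and sub: "F1 \<subseteq> F2" and supp: "\<And>\<sigma>. f \<sigma> \<noteq> 0 \<Longrightarrow> \<sigma> \<in> F1"
  shows "bd F1 f = bd F2 f"
proof (rule ext)
  fix \<tau>
  show "bd F1 f \<tau> = bd F2 f \<tau>"
    unfolding bd_alt
    by (rule sum.mono_neutral_left) (use cplx_fin_idx[OF cx] sub supp in auto)
qed



definition Pm :: "nat \<Rightarrow> (nat set \<Rightarrow> 'k::field) \<Rightarrow> (nat set \<Rightarrow> 'k)" where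
  "Pm v f = (\<lambda>\<tau>. if v \<in> \<tau> then 0 else sg \<tau> v * f (insert v \<tau>))"

definition Qm :: "nat \<Rightarrow> (nat set \<Rightarrow> 'k::field) \<Rightarrow> (nat set \<Rightarrow> 'k)" where
  "Qm v f = (\<lambda>\<sigma>. if v \<in> \<sigma> then sg (\<sigma> - {v}) v * f (\<sigma> - {v}) else 0)"

lemma Pm_add: "Pm v (f + g) = Pm v f + Pm v g"
  by (auto simp: Pm_def fun_eq_iff algebra_simps)
lemma Pm_diff: "Pm v (f - g) = Pm v f - Pm v g"
  by (auto simp: Pm_def fun_eq_iff algebra_simps)
lemma Pm_zero[simp]: "Pm v 0 = 0"
  by (auto simp: Pm_def fun_eq_iff)
lemma Pm_scale: "Pm v (fscale c f) = fscale c (Pm v f)"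
  by (auto simp: Pm_def fun_eq_iff fscale_def algebra_simps)

locale lk =
  fixes V :: "nat set" and E :: "nat \<Rightarrow> nat \<Rightarrow> bool" and v :: nat
  assumes finV: "finite V" and vV: "v \<in> V" and symE: "\<And>x y. E x y = E y x" and irr: "\<And>x. \<not> E x x"
begin

abbreviation "Dl \<equiv> indep_complex V E"
abbreviation "Dd \<equiv> indep_complex (V - {v}) E"
abbreviation "Vl \<equiv> {u\<in>V. u \<noteq> v \<and> \<not> E v u}"
abbreviation "Ll \<equiv> indep_complex Vl E"

lemma cx_Dl: "cplx V Dl" by (rule cplx_indep[OF finV])
lemma cx_Dd: "cplx (V - {v}) Dd" by (rule cplx_indep) (use finV in simp)
lemma cx_Ll: "cplx Vl Ll" by (rule cplx_indep) (use finV in simp)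

lemma Dd_iff: "\<sigma> \<in> Dd \<longleftrightarrow> \<sigma> \<in> Dl \<and> v \<notin> \<sigma>"
  by (auto simp: indep_complex_def)

lemma Dd_sub: "Dd \<subseteq> Dl" using Dd_iff by blast

lemma Ll_nv: "\<sigma> \<in> Ll \<Longrightarrow> v \<notin> \<sigma>"
  by (auto simp: indep_complex_def)

lemma ins_iff: "v \<notin> \<sigma> \<Longrightarrow> insert v \<sigma> \<in> Dl \<longleftrightarrow> \<sigma> \<in> Ll"
  using vV irr symE by (auto simp: indep_complex_def)

lemma Pm_chains:
  assumes "f \<in> chains Dl k"
  shows "Pm v f \<in> chains Ll (k - 1)"
  unfolding chains_def
proof (intro CollectI allI impI)
  fix \<tau> assume h: "(Pm v f \<tau> :: 'a) \<noteq> 0"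
  then have nv: "v \<notin> \<tau>" and fz: "f (insert v \<tau>) \<noteq> 0" by (auto simp: Pm_def split: if_splits)
  then have m: "insert v \<tau> \<in> Dl" "card (insert v \<tau>) = k" using assms by (auto simp: chains_def)
  have "finite \<tau>" using cplx_fin_face[OF cx_Dl m(1)] by simp
  then show "\<tau> \<in> Ll \<and> card \<tau> = k - 1" using m nv ins_iff by auto
qed

lemma Qm_chains:
  assumes "c \<in> chains Ll k"
  shows "Qm v c \<in> chains Dl (Suc k)"
  unfolding chains_def
proof (intro CollectI allI impI)
  fix \<sigma> assume h: "(Qm v c \<sigma> :: 'a) \<noteq> 0"
  then have nv: "v \<in> \<sigma>" and fz: "c (\<sigma> - {v}) \<noteq> 0" by (auto simp: Qm_def split: if_splits)
  then have m: "\<sigma> - {v} \<in> Ll" "card (\<sigma> - {v}) = k" using assms by (auto simp: chains_def)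
  have fin: "finite (\<sigma> - {v})" using cplx_fin_face[OF cx_Ll m(1)] by simp
  have eq: "\<sigma> = insert v (\<sigma> - {v})" using nv by auto
  have "\<sigma> \<in> Dl" using ins_iff[of "\<sigma> - {v}"] m eq by auto
  moreover have "card \<sigma> = Suc k" using fin m eq by (metis card_insert_disjoint Diff_iff insertI1)
  ultimately show "\<sigma> \<in> Dl \<and> card \<sigma> = Suc k" by simp
qed

lemma PQ:
  assumes "c \<in> chains Ll k"
  shows "Pm v (Qm v c) = c"
proof (rule ext)
  fix \<tau>
  show "Pm v (Qm v c) \<tau> = c \<tau>"
  proof (cases "v \<in> \<tau>")
    case True
    then have "c \<tau> = 0" using assms Ll_nv by (auto simp: chains_def)
    then show ?thesis using True by (simp add: Pm_def)
  next
    case False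
    then have "insert v \<tau> - {v} = \<tau>" by auto
    then show ?thesis using False by (simp add: Pm_def Qm_def mult.assoc[symmetric])
  qed
qed

lemma P_bd: "Pm v (bd Dl f) = - bd Ll (Pm v f)"
proof (rule ext)
  fix \<tau>
  show "Pm v (bd Dl f) \<tau> = (- bd Ll (Pm v f)) \<tau>"
  proof (cases "v \<in> \<tau>")
    case True
    have "{w. w \<notin> \<tau> \<and> insert w \<tau> \<in> Ll} = {}" using True Ll_nv by auto
    then show ?thesis using True by (simp add: Pm_def bd_alt)
  next
    case False
    have idx: "{w. w \<notin> insert v \<tau> \<and> insert w (insert v \<tau>) \<in> Dl} = {w. w \<notin> \<tau> \<and> insert w \<tau> \<in> Ll}"
    proof -
      have "w \<notin> insert v \<tau> \<and> insert w (insert v \<tau>) \<in> Dl \<longleftrightarrow> w \<notin> \<tau> \<and> insert w \<tau> \<in> Ll" for w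
      proof -
        have "insert w (insert v \<tau>) = insert v (insert w \<tau>)" by (rule insert_commute)
        moreover have "insert w \<tau> \<in> Ll \<Longrightarrow> w \<noteq> v" using Ll_nv by blast
        ultimately show ?thesis using ins_iff[of "insert w \<tau>"] False by auto
      qed
      then show ?thesis by blast
    qed
    have "Pm v (bd Dl f) \<tau> = sg \<tau> v * bd Dl f (insert v \<tau>)" using False by (simp add: Pm_def)
    also have "\<dots> = sg \<tau> v * (\<Sum>w\<in>{w. w \<notin> insert v \<tau> \<and> insert w (insert v \<tau>) \<in> Dl}.
        sg (insert v \<tau>) w * f (insert w (insert v \<tau>)))" by (simp only: bd_alt)
    also have "\<dots> = (\<Sum>w\<in>{w. w \<notin> \<tau> \<and> insert w \<tau> \<in> Ll}.
        sg \<tau> v * (sg (insert v \<tau>) w * f (insert w (insert v \<tau>))))"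
      by (simp only: idx sum_distrib_left)
    also have "\<dots> = (\<Sum>w\<in>{w. w \<notin> \<tau> \<and> insert w \<tau> \<in> Ll}.
        - (sg \<tau> w * Pm v f (insert w \<tau>)))"
    proof (rule sum.cong[OF refl])
      fix w assume w: "w \<in> {w. w \<notin> \<tau> \<and> insert w \<tau> \<in> Ll}"
      then have wv: "w \<noteq> v" using Ll_nv by blast
      have fin: "finite \<tau>" using w cplx_fin_face[OF cx_Ll, of "insert w \<tau>"] by simp
      have "(sg \<tau> v * sg (insert v \<tau>) w :: 'a) = - (sg \<tau> w * sg (insert w \<tau>) v)"
        using w wv False fin by (cases "v < w") (auto simp: sg_insert)
      then show "sg \<tau> v * (sg (insert v \<tau>) w * f (insert w (insert v \<tau>))) =
          - (sg \<tau> w * Pm v f (insert w \<tau>))"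
        using wv False by (simp add: Pm_def insert_commute mult.assoc[symmetric])
    qed
    also have "\<dots> = (- bd Ll (Pm v f)) \<tau>" by (simp add: bd_alt sum_negf)
    finally show ?thesis .
  qed
qed

lemma P0_D:
  assumes "f \<in> chains Dl k" "Pm v f = 0"
  shows "f \<in> chains Dd k"
  unfolding chains_def
proof (intro CollectI allI impI)
  fix \<sigma> assume h: "(f \<sigma> :: 'a) \<noteq> 0"
  then have m: "\<sigma> \<in> Dl" "card \<sigma> = k" using assms by (auto simp: chains_def)
  have "v \<notin> \<sigma>"
  proof
    assume vs: "v \<in> \<sigma>"
    have "Pm v f (\<sigma> - {v}) = sg (\<sigma> - {v}) v * f \<sigma>"
      using vs by (simp add: Pm_def insert_absorb)
    moreover have "(sg (\<sigma> - {v}) v :: 'a) \<noteq> 0" by (simp add: sg_def)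
    ultimately show False using h assms(2) by simp
  qed
  then show "\<sigma> \<in> Dd \<and> card \<sigma> = k" using m Dd_iff by simp
qed

end



lemma bd_in_cycles:
  assumes "cplx V F" "c \<in> chains F (Suc k)"
  shows "bd F c \<in> {f \<in> (chains F k :: (nat set \<Rightarrow> 'k::field) set). bd F f = 0}"
  using bd_chains[OF assms] bd_bd[OF assms(1)] by simp

lemma bds_in_cycles:
  assumes "cplx V F"
  shows "bd F ` chains F (Suc k) \<subseteq> {f \<in> (chains F k :: (nat set \<Rightarrow> 'k::field) set). bd F f = 0}"
  using bd_in_cycles[OF assms] by blast

context lk begin

lemma chains_Dd_Dl: "chains Dd k \<subseteq> chains Dl k"
  using Dd_sub by (auto simp: chains_def)

lemma bd_Dd: "f \<in> chains Dd k \<Longrightarrow> bd Dd f = bd Dl f"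
  by (rule bd_sub[OF cx_Dl Dd_sub]) (auto simp: chains_def)

lemma deg_step:
  "red_betti TYPE('k::field) Dl (Suc j) \<le> red_betti TYPE('k) Dd (Suc j) + red_betti TYPE('k) Ll j"
proof -
  define ZD where "ZD = {f \<in> (chains Dd (Suc j) :: (nat set \<Rightarrow> 'k) set). bd Dd f = 0}"
  define BD where "BD = bd Dd ` (chains Dd (Suc (Suc j)) :: (nat set \<Rightarrow> 'k) set)"
  define ZX where "ZX = {f \<in> (chains Dl (Suc j) :: (nat set \<Rightarrow> 'k) set). bd Dl f = 0}"
  define BX where "BX = bd Dl ` (chains Dl (Suc (Suc j)) :: (nat set \<Rightarrow> 'k) set)"
  define ZL where "ZL = {f \<in> (chains Ll j :: (nat set \<Rightarrow> 'k) set). bd Ll f = 0}"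
  define BL where "BL = bd Ll ` (chains Ll (Suc j) :: (nat set \<Rightarrow> 'k) set)"
  have red: "red_betti TYPE('k) Dl (Suc j) = fs.dim ZX - fs.dim BX"
    "red_betti TYPE('k) Dd (Suc j) = fs.dim ZD - fs.dim BD"
    "red_betti TYPE('k) Ll j = fs.dim ZL - fs.dim BL"
    by (simp_all add: red_betti_def ZD_def BD_def ZX_def BX_def ZL_def BL_def)
  have sZD: "fs.subspace ZD" unfolding ZD_def by (rule cycles_subspace)
  have sZX: "fs.subspace ZX" unfolding ZX_def by (rule cycles_subspace)
  have sZL: "fs.subspace ZL" unfolding ZL_def by (rule cycles_subspace)
  have sBD: "fs.subspace BD" unfolding BD_def by (rule bd_image_subspace)
  have sBX: "fs.subspace BX" unfolding BX_def by (rule bd_image_subspace)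
  have sBL: "fs.subspace BL" unfolding BL_def by (rule bd_image_subspace)
  have BDZD: "BD \<subseteq> ZD" unfolding BD_def ZD_def by (rule bds_in_cycles[OF cx_Dd])
  have BLZL: "BL \<subseteq> ZL" unfolding BL_def ZL_def by (rule bds_in_cycles[OF cx_Ll])
  have finWD: "finite (dlt ` Dd :: (nat set \<Rightarrow> 'k) set)" using cplx_finite[OF cx_Dd] by simp
  have finWX: "finite (dlt ` Dl :: (nat set \<Rightarrow> 'k) set)" using cplx_finite[OF cx_Dl] by simp
  have finWL: "finite (dlt ` Ll :: (nat set \<Rightarrow> 'k) set)" using cplx_finite[OF cx_Ll] by simp
  have ZDsp: "ZD \<subseteq> fs.span (dlt ` Dd)"
    unfolding ZD_def using chains_span[OF cplx_finite[OF cx_Dd]] by blast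
  have ZLsp: "ZL \<subseteq> fs.span (dlt ` Ll)"
    unfolding ZL_def using chains_span[OF cplx_finite[OF cx_Ll]] by blast
  have BXsp: "BX \<subseteq> fs.span (dlt ` Dl)"
    unfolding BX_def using chains_span[OF cplx_finite[OF cx_Dl]] bd_chains[OF cx_Dl] by blast
  obtain hD where hD: "finite hD" "hD \<subseteq> ZD" "card hD = fs.dim ZD - fs.dim BD"
    "\<And>z. z \<in> ZD \<Longrightarrow> \<exists>b\<in>BD. z - b \<in> fs.span hD"
    using fs.ext_basis_fd[OF sBD BDZD ZDsp finWD] by blast
  define U where "U = {y \<in> ZL. \<exists>z\<in>ZX. Pm v z - y \<in> BL}"
  have sU: "fs.subspace U"
    unfolding fs.subspace_def
  proof (intro conjI ballI allI)
    have "Pm v 0 - 0 \<in> BL" using fs.subspace_0[OF sBL] by simp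
    then show "0 \<in> U" unfolding U_def using fs.subspace_0[OF sZL] fs.subspace_0[OF sZX] by blast
  next
    fix x y assume "x \<in> U" "y \<in> U"
    then obtain zx zy where "x \<in> ZL" "y \<in> ZL" "zx \<in> ZX" "zy \<in> ZX"
      "Pm v zx - x \<in> BL" "Pm v zy - y \<in> BL" unfolding U_def by blast
    moreover have "Pm v (zx + zy) - (x + y) \<in> BL"
    proof -
      have e: "Pm v (zx + zy) - (x + y) = (Pm v zx - x) + (Pm v zy - y)"
        by (simp add: Pm_add algebra_simps)
      show ?thesis unfolding e using calculation by (intro fs.subspace_add[OF sBL]) auto
    qed
    ultimately show "x + y \<in> U" unfolding U_def
      using fs.subspace_add[OF sZL] fs.subspace_add[OF sZX] fs.subspace_add[OF sBL]
      by (intro CollectI conjI bexI[of _ "zx + zy"]) auto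
  next
    fix c x assume "x \<in> U"
    then obtain zx where "x \<in> ZL" "zx \<in> ZX" "Pm v zx - x \<in> BL" unfolding U_def by blast
    moreover have "Pm v (fscale c zx) - fscale c x \<in> BL"
    proof -
      have e: "Pm v (fscale c zx) - fscale c x = fscale c (Pm v zx - x)"
        unfolding Pm_scale by (simp add: fscale_def fun_eq_iff algebra_simps)
      show ?thesis unfolding e using calculation by (intro fs.subspace_scale[OF sBL]) auto
    qed
    ultimately show "fscale c x \<in> U" unfolding U_def
      using fs.subspace_scale[OF sZL] fs.subspace_scale[OF sZX] fs.subspace_scale[OF sBL]
      by (intro CollectI conjI bexI[of _ "fscale c zx"]) auto
  qed
  have BLU: "BL \<subseteq> U"
  proof
    fix y assume y: "y \<in> BL"
    have "Pm v 0 - y \<in> BL" using fs.subspace_neg[OF sBL y] by simp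
    then show "y \<in> U" unfolding U_def using y BLZL fs.subspace_0[OF sZX] by blast
  qed
  have UZL: "U \<subseteq> ZL" unfolding U_def by blast
  have Usp: "U \<subseteq> fs.span (dlt ` Ll)" using UZL ZLsp by blast
  obtain hU where hU: "finite hU" "hU \<subseteq> U" "card hU = fs.dim U - fs.dim BL"
    "\<And>z. z \<in> U \<Longrightarrow> \<exists>b\<in>BL. z - b \<in> fs.span hU"
    using fs.ext_basis_fd[OF sBL BLU Usp finWL] by blast
  define lf where "lf = (\<lambda>y. SOME z. z \<in> ZX \<and> Pm v z - y \<in> BL)"
  have lf: "lf y \<in> ZX \<and> Pm v (lf y) - y \<in> BL" if "y \<in> hU" for y
  proof -
    have "\<exists>z. z \<in> ZX \<and> Pm v z - y \<in> BL" using that hU(2) unfolding U_def by blast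
    then show ?thesis unfolding lf_def by (rule someI_ex)
  qed
  define T where "T = lf ` hU"
  have finT: "finite T" "card T \<le> card hU" using hU(1) by (simp_all add: T_def card_image_le)
  have TZX: "fs.span T \<subseteq> ZX" using fs.span_minimal[OF _ sZX] lf unfolding T_def by blast
  have lift: "\<exists>t\<in>fs.span T. Pm v t - w \<in> BL" if "w \<in> fs.span hU" for w
    using that
  proof (induction rule: fs.span_induct_alt)
    case base
    have "Pm v 0 - 0 \<in> BL" using fs.subspace_0[OF sBL] by simp
    then show ?case using fs.span_zero by blast
  next
    case (step c x y)
    then obtain t where t: "t \<in> fs.span T" "Pm v t - y \<in> BL" by blast
    let ?t = "fscale c (lf x) + t"
    have "lf x \<in> fs.span T" using step(1) unfolding T_def by (intro fs.span_base) auto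
    then have "?t \<in> fs.span T" using t(1) by (intro fs.span_add fs.span_scale)
    moreover have "Pm v ?t - (fscale c x + y) \<in> BL"
    proof -
      have e: "Pm v ?t - (fscale c x + y) = fscale c (Pm v (lf x) - x) + (Pm v t - y)"
        unfolding Pm_add Pm_scale by (simp add: fscale_def fun_eq_iff algebra_simps)
      have "fscale c (Pm v (lf x) - x) + (Pm v t - y) \<in> BL"
        using lf[OF step(1)] t(2) fs.subspace_add[OF sBL] fs.subspace_scale[OF sBL] by blast
      then show ?thesis by (simp only: e)
    qed
    ultimately show ?case by blast
  qed
  have main: "\<exists>b\<in>BX. z - b \<in> fs.span (hD \<union> T)" if z: "z \<in> ZX" for z
  proof -
    have zc: "z \<in> chains Dl (Suc j)" "bd Dl z = 0" using z unfolding ZX_def by auto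
    have Pz: "Pm v z \<in> ZL"
      using Pm_chains[OF zc(1)] P_bd[of z] zc(2) unfolding ZL_def by (simp add: neg_equal_0_iff_equal)
    have "Pm v z - Pm v z \<in> BL" using fs.subspace_0[OF sBL] by simp
    then have "Pm v z \<in> U" unfolding U_def using z Pz by blast
    then obtain b1 where b1: "b1 \<in> BL" "Pm v z - b1 \<in> fs.span hU" using hU(4) by blast
    obtain t where t: "t \<in> fs.span T" "Pm v t - (Pm v z - b1) \<in> BL" using lift[OF b1(2)] by blast
    define z1 where "z1 = z - t"
    have z1: "z1 \<in> ZX" using z t(1) TZX fs.subspace_diff[OF sZX] unfolding z1_def by blast
    have e: "Pm v z1 = b1 - (Pm v t - (Pm v z - b1))" by (simp add: z1_def Pm_diff)
    have "b1 - (Pm v t - (Pm v z - b1)) \<in> BL" using b1(1) t(2) fs.subspace_diff[OF sBL] by blast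
    then have "Pm v z1 \<in> BL" by (simp only: e)
    then obtain c where c: "c \<in> chains Ll (Suc j)" "Pm v z1 = bd Ll c" unfolding BL_def by blast
    define z2 where "z2 = z1 + bd Dl (Qm v c)"
    have Qc: "Qm v c \<in> chains Dl (Suc (Suc j))" by (rule Qm_chains[OF c(1)])
    have bQ: "bd Dl (Qm v c) \<in> ZX" unfolding ZX_def by (rule bd_in_cycles[OF cx_Dl Qc])
    have bQX: "bd Dl (Qm v c) \<in> BX" unfolding BX_def using Qc by blast
    have z2X: "z2 \<in> ZX" unfolding z2_def using z1 bQ fs.subspace_add[OF sZX] by blast
    have "Pm v z2 = bd Ll c + Pm v (bd Dl (Qm v c))" by (simp add: z2_def Pm_add c(2))
    also have "\<dots> = 0" using P_bd[of "Qm v c"] PQ[OF c(1)] by simp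
    finally have Pz2: "Pm v z2 = 0" .
    have z2c: "z2 \<in> chains Dd (Suc j)" using P0_D[OF _ Pz2] z2X unfolding ZX_def by blast
    have z2D: "z2 \<in> ZD" unfolding ZD_def using z2c bd_Dd[OF z2c] z2X unfolding ZX_def by simp
    obtain bD where bD: "bD \<in> BD" "z2 - bD \<in> fs.span hD" using hD(4)[OF z2D] by blast
    have bDX: "bD \<in> BX" using bD(1) chains_Dd_Dl bd_Dd unfolding BD_def BX_def by blast
    define b where "b = bD - bd Dl (Qm v c)"
    have bX: "b \<in> BX" unfolding b_def using bDX bQX fs.subspace_diff[OF sBX] by blast
    have "z - b = t + (z2 - bD)" by (simp add: b_def z2_def z1_def algebra_simps)
    moreover have "t \<in> fs.span (hD \<union> T)" using t(1) fs.span_mono[of T "hD \<union> T"] by blast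
    moreover have "z2 - bD \<in> fs.span (hD \<union> T)" using bD(2) fs.span_mono[of hD "hD \<union> T"] by blast
    ultimately have "z - b \<in> fs.span (hD \<union> T)" using fs.span_add by simp
    then show ?thesis using bX by blast
  qed
  have "fs.dim ZX \<le> fs.dim BX + card (hD \<union> T)"
    by (rule fs.dim_sum_le_fd[OF main _ BXsp finWX]) (use hD(1) finT in auto)
  also have "\<dots> \<le> fs.dim BX + card hD + card T" using card_Un_le[of hD T] by simp
  finally have 1: "fs.dim ZX \<le> fs.dim BX + card hD + card hU" using finT by simp
  have 2: "fs.dim U \<le> fs.dim ZL" by (rule fs.dim_mono_fd[OF UZL ZLsp finWL])
  show ?thesis using 1 2 hD(3) hU(3) red by linarith
qed

lemma deg_zero:
  "red_betti TYPE('k::field) Dl 0 \<le> red_betti TYPE('k) Dd 0"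
proof -
  have ch: "chains Dl 0 = chains Dd 0"
  proof -
    have "\<sigma> \<in> Dl \<and> card \<sigma> = 0 \<longleftrightarrow> \<sigma> \<in> Dd \<and> card \<sigma> = 0" for \<sigma>
      using cplx_fin_face[OF cx_Dl, of \<sigma>] cplx_fin_face[OF cx_Dd, of \<sigma>]
      by (auto simp: indep_complex_def)
    then show ?thesis by (simp add: chains_def)
  qed
  have Z: "{f \<in> (chains Dl 0 :: (nat set \<Rightarrow> 'k) set). bd Dl f = 0} =
      {f \<in> chains Dd 0. bd Dd f = 0}"
    using bd_Dd ch by auto
  have "bd Dd ` (chains Dd (Suc 0) :: (nat set \<Rightarrow> 'k) set) \<subseteq> bd Dl ` chains Dl (Suc 0)"
    using chains_Dd_Dl bd_Dd by blast
  moreover have "bd Dl ` (chains Dl (Suc 0) :: (nat set \<Rightarrow> 'k) set) \<subseteq> fs.span (dlt ` Dl)"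
    using chains_span[OF cplx_finite[OF cx_Dl]] bd_chains[OF cx_Dl] by blast
  ultimately have "fs.dim (bd Dd ` (chains Dd (Suc 0) :: (nat set \<Rightarrow> 'k) set))
      \<le> fs.dim (bd Dl ` (chains Dl (Suc 0) :: (nat set \<Rightarrow> 'k) set))"
    by (rule fs.dim_mono_fd) (use cplx_finite[OF cx_Dl] in simp)
  then show ?thesis unfolding red_betti_def Z by linarith
qed

end



lemma red_zero_above:
  assumes cx: "cplx V F" and k: "card V < k"
  shows "red_betti TYPE('k::field) F k = 0"
proof -
  have "(chains F k :: (nat set \<Rightarrow> 'k) set) \<subseteq> {0}"
  proof
    fix f :: "nat set \<Rightarrow> 'k" assume f: "f \<in> chains F k"
    have "f \<sigma> = 0" for \<sigma>
    proof (rule ccontr)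
      assume "f \<sigma> \<noteq> 0"
      then have "\<sigma> \<in> F" "card \<sigma> = k" using f by (auto simp: chains_def)
      moreover have "\<sigma> \<subseteq> V" "finite V" using cx \<open>\<sigma> \<in> F\<close> by (auto simp: cplx_def)
      ultimately have "k \<le> card V" using card_mono by metis
      then show False using k by simp
    qed
    then show "f \<in> {0}" by (auto simp: fun_eq_iff)
  qed
  then have "{f \<in> (chains F k :: (nat set \<Rightarrow> 'k) set). bd F f = 0} \<subseteq> fs.span ({} :: (nat set \<Rightarrow> 'k) set)" by auto
  then have "fs.dim {f \<in> (chains F k :: (nat set \<Rightarrow> 'k) set). bd F f = 0} \<le> card ({} :: (nat set \<Rightarrow> 'k) set)"
    by (rule fs.dim_le_card) simp
  then show ?thesis by (simp add: red_betti_def)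
qed

lemma total_ext:
  assumes "finite V" "card V \<le> m"
  shows "total_red_betti TYPE('k::field) V E = (\<Sum>k\<in>{0..m}. red_betti TYPE('k) (indep_complex V E) k)"
  unfolding total_red_betti_def
  by (rule sum.mono_neutral_left) (use assms red_zero_above[OF cplx_indep[OF assms(1)], where 'k='k] in auto)

lemma Qm_zero[simp]: "Qm v 0 = 0"
  by (simp add: Qm_def fun_eq_iff)

context lk begin

lemma total_step:
  "total_red_betti TYPE('k::field) V E \<le> total_red_betti TYPE('k) (V - {v}) E + total_red_betti TYPE('k) Vl E"
proof -
  obtain m where m: "card V = Suc m" using vV finV by (metis card_Suc_Diff1)
  have cD: "card (V - {v}) = m" using m vV finV by simp
  have "Vl \<subseteq> V - {v}" by blast
  then have cL: "card Vl \<le> m" using cD finV card_mono[of "V - {v}" Vl] by simp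
  let ?r = "\<lambda>F k. red_betti TYPE('k) F k"
  have "total_red_betti TYPE('k) V E = (\<Sum>k=0..Suc m. ?r Dl k)" by (simp add: total_red_betti_def m)
  also have "\<dots> = ?r Dl 0 + (\<Sum>j=0..m. ?r Dl (Suc j))" by (subst sum.atLeast0_atMost_Suc_shift) (simp add: comp_def)
  also have "\<dots> \<le> ?r Dd 0 + (\<Sum>j=0..m. ?r Dd (Suc j) + ?r Ll j)"
    using deg_zero deg_step by (intro add_mono sum_mono) auto
  also have "\<dots> = (?r Dd 0 + (\<Sum>j=0..m. ?r Dd (Suc j))) + (\<Sum>j=0..m. ?r Ll j)"
    by (simp add: sum.distrib)
  also have "?r Dd 0 + (\<Sum>j=0..m. ?r Dd (Suc j)) = (\<Sum>k=0..Suc m. ?r Dd k)"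
    by (subst sum.atLeast0_atMost_Suc_shift) (simp add: comp_def)
  also have "\<dots> = total_red_betti TYPE('k) (V - {v}) E"
    by (rule total_ext[symmetric]) (use finV cD in auto)
  also have "(\<Sum>j=0..m. ?r Ll j) = total_red_betti TYPE('k) Vl E"
    by (rule total_ext[symmetric]) (use finV cL in auto)
  finally show ?thesis .
qed

end

locale cn =
  fixes V :: "nat set" and E :: "nat \<Rightarrow> nat \<Rightarrow> bool" and v :: nat
  assumes finV: "finite V" and vV: "v \<in> V" and symE: "\<And>x y. E x y = E y x" and irr: "\<And>x. \<not> E x x"
    and iso: "\<And>u. u \<in> V \<Longrightarrow> \<not> E v u"
begin

abbreviation "Dl \<equiv> indep_complex V E"

lemma cx_Dl: "cplx V Dl" by (rule cplx_indep[OF finV])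

lemma cone_iff: "v \<notin> \<sigma> \<Longrightarrow> insert v \<sigma> \<in> Dl \<longleftrightarrow> \<sigma> \<in> Dl"
proof
  assume "v \<notin> \<sigma>" "insert v \<sigma> \<in> Dl"
  then show "\<sigma> \<in> Dl" by (auto simp: indep_complex_def)
next
  assume a: "v \<notin> \<sigma>" "\<sigma> \<in> Dl"
  then have s: "\<sigma> \<subseteq> V" "\<forall>x\<in>\<sigma>. \<forall>y\<in>\<sigma>. \<not> E x y" by (auto simp: indep_complex_def)
  have "\<forall>x\<in>insert v \<sigma>. \<forall>y\<in>insert v \<sigma>. \<not> E x y"
  proof (intro ballI)
    fix x y assume "x \<in> insert v \<sigma>" "y \<in> insert v \<sigma>"
    then show "\<not> E x y" using s irr iso symE vV by (metis insertE subsetD)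
  qed
  then show "insert v \<sigma> \<in> Dl" using s vV by (auto simp: indep_complex_def)
qed

lemma homotopy:
  assumes supp: "\<And>\<sigma>. f \<sigma> \<noteq> 0 \<Longrightarrow> \<sigma> \<in> Dl"
  shows "bd Dl (Qm v f) + Qm v (bd Dl f) = (f :: nat set \<Rightarrow> 'k::field)"
proof (rule ext)
  fix \<tau>
  show "(bd Dl (Qm v f) + Qm v (bd Dl f)) \<tau> = f \<tau>"
  proof (cases "v \<in> \<tau>")
    case False
    let ?I = "{w. w \<notin> \<tau> \<and> insert w \<tau> \<in> Dl}"
    have fin: "finite ?I" by (rule cplx_fin_idx[OF cx_Dl])
    have "bd Dl (Qm v f) \<tau> = (\<Sum>w\<in>?I. if w = v then f \<tau> else 0)"
      unfolding bd_alt
    proof (rule sum.cong[OF refl])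
      fix w assume "w \<in> ?I"
      show "sg \<tau> w * Qm v f (insert w \<tau>) = (if w = v then f \<tau> else 0)"
        using False by (auto simp: Qm_def mult.assoc[symmetric])
    qed
    also have "\<dots> = (if v \<in> ?I then f \<tau> else 0)" using fin by (simp add: sum.delta')
    also have "\<dots> = f \<tau>" using False cone_iff supp by auto
    finally show ?thesis using False by (simp add: Qm_def)
  next
    case True
    define \<rho> where "\<rho> = \<tau> - {v}"
    have \<tau>e: "\<tau> = insert v \<rho>" and v\<rho>: "v \<notin> \<rho>" using True by (auto simp: \<rho>_def)
    have vt: "v \<in> \<tau>" using True .
    let ?I1 = "{w. w \<notin> \<tau> \<and> insert w \<tau> \<in> Dl}"
    let ?I2 = "{w. w \<notin> \<rho> \<and> insert w \<rho> \<in> Dl}"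
    have I1: "?I1 = ?I2 - {v}"
    proof -
      have "w \<notin> \<tau> \<and> insert w \<tau> \<in> Dl \<longleftrightarrow> w \<in> ?I2 - {v}" for w
      proof -
        have "insert w \<tau> = insert v (insert w \<rho>)" using \<tau>e by auto
        then show ?thesis using cone_iff[of "insert w \<rho>"] v\<rho> \<tau>e by auto
      qed
      then show ?thesis by blast
    qed
    have fin2: "finite ?I2" by (rule cplx_fin_idx[OF cx_Dl])
    define g where "g = (\<lambda>w. sg \<rho> v * (sg \<rho> w * f (insert w \<rho>)))"
    have Qb: "Qm v (bd Dl f) \<tau> = (\<Sum>w\<in>?I2. g w)"
      using True by (simp add: Qm_def \<rho>_def[symmetric] bd_alt g_def sum_distrib_left)
    have Bq: "bd Dl (Qm v f) \<tau> = (\<Sum>w\<in>?I2 - {v}. - g w)"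
      unfolding bd_alt I1
    proof (rule sum.cong[OF refl])
      fix w assume w: "w \<in> ?I2 - {v}"
      have fin\<rho>: "finite \<rho>" using w cplx_fin_face[OF cx_Dl, of "insert w \<rho>"] by simp
      have wv: "w \<noteq> v" "w \<notin> \<rho>" using w by auto
      have e1: "insert w \<tau> - {v} = insert w \<rho>" using \<tau>e v\<rho> wv by auto
      have s: "(sg \<tau> w * sg (insert w \<rho>) v :: 'k) = - (sg \<rho> v * sg \<rho> w)"
        unfolding \<tau>e using fin\<rho> wv v\<rho> by (cases "v < w") (auto simp: sg_insert)
      have "sg \<tau> w * Qm v f (insert w \<tau>) = (sg \<tau> w * sg (insert w \<rho>) v) * f (insert w \<rho>)"
        using vt by (simp add: Qm_def e1)
      also have "\<dots> = - (sg \<rho> v * sg \<rho> w) * f (insert w \<rho>)" by (simp only: s)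
      also have "\<dots> = - g w" by (simp add: g_def)
      finally show "sg \<tau> w * Qm v f (insert w \<tau>) = - g w" .
    qed
    have "Qm v (bd Dl f) \<tau> = (if v \<in> ?I2 then g v else 0) + (\<Sum>w\<in>?I2 - {v}. g w)"
    proof (cases "v \<in> ?I2")
      case True
      then show ?thesis unfolding Qb using sum.remove[OF fin2 True] by simp
    next
      case False
      then show ?thesis unfolding Qb by auto
    qed
    moreover have "(if v \<in> ?I2 then g v else 0) = f \<tau>"
    proof (cases "v \<in> ?I2")
      case True
      then show ?thesis by (simp add: g_def \<tau>e mult.assoc[symmetric])
    next
      case False
      then have "\<tau> \<notin> Dl" using \<tau>e v\<rho> by auto
      then show ?thesis using False supp by auto
    qed
    ultimately show ?thesis using Bq by (simp add: sum_negf)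
  qed
qed

lemma cone_red_zero: "red_betti TYPE('k::field) Dl k = 0"
proof -
  let ?Z = "{f \<in> (chains Dl k :: (nat set \<Rightarrow> 'k) set). bd Dl f = 0}"
  let ?B = "bd Dl ` (chains Dl (Suc k) :: (nat set \<Rightarrow> 'k) set)"
  have "?Z \<subseteq> ?B"
  proof
    fix z assume z: "z \<in> ?Z"
    have supp: "\<And>\<sigma>. z \<sigma> \<noteq> 0 \<Longrightarrow> \<sigma> \<in> Dl" using z by (auto simp: chains_def)
    have h: "bd Dl (Qm v z) + Qm v (bd Dl z) = z" by (rule homotopy) (rule supp)
    then have "z = bd Dl (Qm v z)" using z by (simp add: Qm_zero)
    moreover have "Qm v z \<in> chains Dl (Suc k)"
      unfolding chains_def
    proof (intro CollectI allI impI)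
      fix \<sigma> assume h: "Qm v z \<sigma> \<noteq> 0"
      then have nv: "v \<in> \<sigma>" and fz: "z (\<sigma> - {v}) \<noteq> 0" by (auto simp: Qm_def split: if_splits)
      then have m: "\<sigma> - {v} \<in> Dl" "card (\<sigma> - {v}) = k" using z by (auto simp: chains_def)
      have fin: "finite (\<sigma> - {v})" using cplx_fin_face[OF cx_Dl m(1)] by simp
      have eq: "\<sigma> = insert v (\<sigma> - {v})" using nv by auto
      have "\<sigma> \<in> Dl" using cone_iff[of "\<sigma> - {v}"] m eq by auto
      moreover have "card \<sigma> = Suc k" using fin m eq by (metis card_insert_disjoint Diff_iff insertI1)
      ultimately show "\<sigma> \<in> Dl \<and> card \<sigma> = Suc k" by simp
    qed
    ultimately show "z \<in> ?B" by blast
  qed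
  moreover have "?B \<subseteq> fs.span (dlt ` Dl)"
    using chains_span[OF cplx_finite[OF cx_Dl]] bd_chains[OF cx_Dl] by blast
  ultimately have "fs.dim ?Z \<le> fs.dim ?B" by (rule fs.dim_mono_fd) (use cplx_finite[OF cx_Dl] in simp)
  then show ?thesis by (simp add: red_betti_def)
qed

lemma cone_total: "total_red_betti TYPE('k::field) V E = 0"
  unfolding total_red_betti_def by (simp add: cone_red_zero)

end

lemma total_empty: "total_red_betti TYPE('k::field) {} E \<le> 1"
proof -
  have "total_red_betti TYPE('k) {} E = red_betti TYPE('k) (indep_complex {} E) 0"
    by (simp add: total_red_betti_def)
  also have "\<dots> \<le> fs.dim {f \<in> (chains (indep_complex {} E) 0 :: (nat set \<Rightarrow> 'k) set). bd (indep_complex {} E) f = 0}"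
    by (simp add: red_betti_def)
  also have "\<dots> \<le> card (dlt ` indep_complex {} E :: (nat set \<Rightarrow> 'k) set)"
    by (rule fs.dim_le_card) (use chains_span[OF cplx_finite[OF cplx_indep[of "{}" E]]] cplx_finite[OF cplx_indep[of "{}" E]] in auto)
  also have "\<dots> \<le> 1"
  proof -
    have "indep_complex {} E = {{}}" by (auto simp: indep_complex_def)
    then show ?thesis by simp
  qed
  finally show ?thesis .
qed



lemma tp_sym: "tp_adj x y = tp_adj y x" by (auto simp: tp_adj_def)
lemma tp_irr: "\<not> tp_adj x x" by (auto simp: tp_adj_def)

lemma tstep:
  assumes "finite W"
  shows "total_red_betti TYPE('k::field) W tp_adj \<le> total_red_betti TYPE('k) (W - {v}) tp_adj
     + total_red_betti TYPE('k) {u\<in>W. u \<noteq> v \<and> \<not> tp_adj v u} tp_adj"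
proof (cases "v \<in> W")
  case True
  interpret lk W tp_adj v using assms True tp_sym tp_irr by unfold_locales auto
  show ?thesis by (rule total_step)
next
  case False
  then show ?thesis by simp
qed

lemma tiso:
  assumes "finite W" "v \<in> W" "\<And>u. u \<in> W \<Longrightarrow> \<not> tp_adj v u"
  shows "total_red_betti TYPE('k::field) W tp_adj = 0"
proof -
  interpret cn W tp_adj v using assms tp_sym tp_irr by unfold_locales auto
  show ?thesis by (rule cone_total)
qed

abbreviation T :: "'k::field itself \<Rightarrow> nat \<Rightarrow> nat \<Rightarrow> nat" where
  "T K a n \<equiv> total_red_betti K {a+1..a+n} tp_adj"

lemma trec:
  assumes n: "3 \<le> n"
  shows "T TYPE('k::field) a n \<le> T TYPE('k) (a+4) (n-4) + T TYPE('k) (a+5) (n-5)"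
proof -
  let ?t = "\<lambda>W. total_red_betti TYPE('k) W tp_adj"
  define V where "V = {a+1..a+n}"
  define V1 where "V1 = V - {a+4}"
  define V2 where "V2 = V1 - {a+1}"
  define V3 where "V3 = V2 - {a+5}"
  have fin: "finite V" "finite V1" "finite V2" "finite V3" by (simp_all add: V_def V1_def V2_def V3_def)
  have s1: "?t V \<le> ?t V1 + ?t {u\<in>V. u \<noteq> a+4 \<and> \<not> tp_adj (a+4) u}"
    unfolding V1_def by (rule tstep[OF fin(1)])
  have z1: "?t {u\<in>V. u \<noteq> a+4 \<and> \<not> tp_adj (a+4) u} = 0"
    by (rule tiso[where v="a+1"]) (use n in \<open>auto simp: V_def tp_adj_def\<close>)
  have s2: "?t V1 \<le> ?t V2 + ?t {u\<in>V1. u \<noteq> a+1 \<and> \<not> tp_adj (a+1) u}"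
    unfolding V2_def by (rule tstep[OF fin(2)])
  have e2: "{u\<in>V1. u \<noteq> a+1 \<and> \<not> tp_adj (a+1) u} = {a+4+1..a+4+(n-4)}"
    using n by (auto simp: V1_def V_def tp_adj_def)
  have s3: "?t V2 \<le> ?t V3 + ?t {u\<in>V2. u \<noteq> a+5 \<and> \<not> tp_adj (a+5) u}"
    unfolding V3_def by (rule tstep[OF fin(3)])
  have z3: "?t {u\<in>V2. u \<noteq> a+5 \<and> \<not> tp_adj (a+5) u} = 0"
    by (rule tiso[where v="a+2"]) (use n in \<open>auto simp: V2_def V1_def V_def tp_adj_def\<close>)
  have s4: "?t V3 \<le> ?t (V3 - {a+2}) + ?t {u\<in>V3. u \<noteq> a+2 \<and> \<not> tp_adj (a+2) u}"
    by (rule tstep[OF fin(4)])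
  have z4: "?t (V3 - {a+2}) = 0"
    by (rule tiso[where v="a+3"]) (use n in \<open>auto simp: V3_def V2_def V1_def V_def tp_adj_def\<close>)
  have e4: "{u\<in>V3. u \<noteq> a+2 \<and> \<not> tp_adj (a+2) u} = {a+5+1..a+5+(n-5)}"
    using n by (auto simp: V3_def V2_def V1_def V_def tp_adj_def)
  show ?thesis using s1 z1 s2 e2 s3 z3 s4 z4 e4 unfolding V_def[symmetric] by simp
qed



lemma T0: "T TYPE('k::field) a 0 \<le> 1"
  using total_empty[where 'k='k and E=tp_adj] by simp

lemma T1: "T TYPE('k::field) a 1 = 0"
  by (rule tiso[where v="a+1"]) (auto simp: tp_adj_def)

lemma T2: "T TYPE('k::field) a 2 \<le> 1"
proof -
  let ?t = "\<lambda>W. total_red_betti TYPE('k) W tp_adj"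
  have s: "?t {a+1..a+2} \<le> ?t ({a+1..a+2} - {a+1}) + ?t {u\<in>{a+1..a+2}. u \<noteq> a+1 \<and> \<not> tp_adj (a+1) u}"
    by (rule tstep) simp
  have z: "?t ({a+1..a+2} - {a+1}) = 0"
    by (rule tiso[where v="a+2"]) (auto simp: tp_adj_def)
  have e: "{u\<in>{a+1..a+2}. u \<noteq> a+1 \<and> \<not> tp_adj (a+1) u} = {}"
    by (auto simp: tp_adj_def)
  have s2: "?t {a+1..a+2} \<le> ?t ({a+1..a+2} - {a+1}) + ?t {}" using s unfolding e .
  show ?thesis using s2 z total_empty[where 'k='k and E=tp_adj] by linarith
qed

lemma T3: "T TYPE('k::field) a 3 \<le> 2"
  using trec[of 3 a, where 'k='k] T0[of "a+4", where 'k='k] T0[of "a+5", where 'k='k] by simp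
lemma T4: "T TYPE('k::field) a 4 \<le> 2"
  using trec[of 4 a, where 'k='k] T0[of "a+4", where 'k='k] T0[of "a+5", where 'k='k] by simp
lemma T5: "T TYPE('k::field) a 5 \<le> 1"
  using trec[of 5 a, where 'k='k] T1[of "a+4", where 'k='k] T0[of "a+5", where 'k='k] by simp
lemma T6: "T TYPE('k::field) a 6 \<le> 1"
  using trec[of 6 a, where 'k='k] T2[of "a+4", where 'k='k] T1[of "a+5", where 'k='k] by simp
lemma T7: "T TYPE('k::field) a 7 \<le> 3"
  using trec[of 7 a, where 'k='k] T3[of "a+4", where 'k='k] T2[of "a+5", where 'k='k] by simp
lemma T8: "T TYPE('k::field) a 8 \<le> 4"
  using trec[of 8 a, where 'k='k] T4[of "a+4", where 'k='k] T3[of "a+5", where 'k='k] by simp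

lemma pw_ge1: "0 \<le> x \<Longrightarrow> 1 \<le> (2::real) powr x"
  by (simp add: ge_one_powr_ge_zero)

lemma pw7: "3 \<le> (2::real) powr (7/4)"
proof -
  have "(3::real) = 81 powr (1/4)"
  proof -
    have "(81::real) = 3 powr 4" by simp
    then show ?thesis by (simp add: powr_powr)
  qed
  also have "\<dots> \<le> 128 powr (1/4)" by (rule powr_mono2) auto
  also have "\<dots> = (2::real) powr (7/4)"
  proof -
    have "(2::real) powr (7/4) = (2 powr 7) powr (1/4)" unfolding powr_powr by simp
    moreover have "(2::real) powr 7 = 128" by (simp add: powr_realpow)
    ultimately show ?thesis by simp
  qed
  finally show ?thesis .
qed

lemma pw_step:
  assumes "5 \<le> n"
  shows "(2::real) powr ((real n - 4) / 4) + 2 powr ((real n - 5) / 4) \<le> 2 powr (real n / 4)"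
proof -
  define x where "x = (2::real) powr ((real n - 5) / 4)"
  define q where "q = (2::real) powr (1/4)"
  have x0: "0 \<le> x" by (simp add: x_def)
  have q1: "1 \<le> q" unfolding q_def by (rule pw_ge1) simp
  have a: "(2::real) powr ((real n - 4) / 4) = x * q"
    unfolding x_def q_def by (simp add: powr_add[symmetric] add_divide_distrib[symmetric])
  have b: "(2::real) powr (real n / 4) = x * q * 2"
  proof -
    have "(2::real) powr (real n / 4) = 2 powr ((real n - 5) / 4 + 1/4 + 1)"
      by (simp add: field_simps)
    also have "\<dots> = x * q * 2 powr 1" unfolding x_def q_def by (simp only: powr_add)
    finally show ?thesis by simp
  qed
  have "x * 1 \<le> x * q" using q1 x0 by (rule mult_left_mono)
  then have "x * q + x \<le> x * q * 2" by linarith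
  then show ?thesis using a b x_def by simp
qed

lemma Tbound: "n \<noteq> 3 \<Longrightarrow> real (T TYPE('k::field) a n) \<le> 2 powr (real n / 4)"
proof (induction n arbitrary: a rule: less_induct)
  case (less n)
  show ?case
  proof (cases "n \<le> 8")
    case True
    have "n = 0 \<or> n = 1 \<or> n = 2 \<or> n = 4 \<or> n = 5 \<or> n = 6 \<or> n = 7 \<or> n = 8" using True less.prems by auto
    then show ?thesis
    proof (elim disjE)
      assume "n = 0" then show ?thesis using T0[of a, where 'k='k] by simp
    next
      assume "n = 1" then show ?thesis using T1[of a, where 'k='k] by simp
    next
      assume n: "n = 2"
      have "real (T TYPE('k) a 2) \<le> 1" using T2[of a, where 'k='k] by simp
      also have "\<dots> \<le> 2 powr (real 2 / 4)" by (rule pw_ge1) simp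
      finally show ?thesis using n by simp
    next
      assume n: "n = 4"
      have "real (T TYPE('k) a 4) \<le> 2" using T4[of a, where 'k='k] by simp
      then show ?thesis using n by simp
    next
      assume n: "n = 5"
      have "real (T TYPE('k) a 5) \<le> 1" using T5[of a, where 'k='k] by simp
      also have "\<dots> \<le> 2 powr (real 5 / 4)" by (rule pw_ge1) simp
      finally show ?thesis using n by simp
    next
      assume n: "n = 6"
      have "real (T TYPE('k) a 6) \<le> 1" using T6[of a, where 'k='k] by simp
      also have "\<dots> \<le> 2 powr (real 6 / 4)" by (rule pw_ge1) simp
      finally show ?thesis using n by simp
    next
      assume n: "n = 7"
      have "real (T TYPE('k) a 7) \<le> 3" using T7[of a, where 'k='k] by simp
      also have "\<dots> \<le> 2 powr (7 / 4)" by (rule pw7)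
      finally show ?thesis using n by simp
    next
      assume n: "n = 8"
      have "real (T TYPE('k) a 8) \<le> 4" using T8[of a, where 'k='k] by simp
      then show ?thesis using n by simp
    qed
  next
    case False
    have r: "T TYPE('k) a n \<le> T TYPE('k) (a+4) (n-4) + T TYPE('k) (a+5) (n-5)"
      using trec[of n a] False by simp
    have i1: "real (T TYPE('k) (a+4) (n-4)) \<le> 2 powr (real (n-4) / 4)"
      using less.IH[of "n-4" "a+4"] False by simp
    have i2: "real (T TYPE('k) (a+5) (n-5)) \<le> 2 powr (real (n-5) / 4)"
      using less.IH[of "n-5" "a+5"] False by simp
    have "real (T TYPE('k) a n) \<le> 2 powr (real (n-4) / 4) + 2 powr (real (n-5) / 4)"
      using r i1 i2 by linarith
    also have "\<dots> = 2 powr ((real n - 4) / 4) + 2 powr ((real n - 5) / 4)"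
      using False by (simp add: of_nat_diff)
    also have "\<dots> \<le> 2 powr (real n / 4)" by (rule pw_step) (use False in simp)
    finally show ?thesis .
  qed
qed



definition F3 where "F3 = indep_complex {1..3::nat} tp_adj"

lemma F3_iff: "\<sigma> \<in> F3 \<longleftrightarrow> \<sigma> = {} \<or> \<sigma> = {1} \<or> \<sigma> = {2} \<or> \<sigma> = {3::nat}"
proof
  assume a: "\<sigma> \<in> F3"
  then have s: "\<sigma> \<subseteq> {1..3}" and ind: "\<forall>x\<in>\<sigma>. \<forall>y\<in>\<sigma>. \<not> tp_adj x y"
    by (auto simp: indep_complex_def F3_def)
  have eq: "x = y" if "x \<in> \<sigma>" "y \<in> \<sigma>" for x y
  proof (rule ccontr)
    assume "x \<noteq> y"
    moreover have "x \<in> {1..3}" "y \<in> {1..3}" using that s by auto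
    then have "\<bar>int x - int y\<bar> \<le> 2" by auto
    ultimately have "tp_adj x y" by (simp add: tp_adj_def)
    then show False using ind that by blast
  qed
  show "\<sigma> = {} \<or> \<sigma> = {1} \<or> \<sigma> = {2} \<or> \<sigma> = {3}"
  proof (cases "\<sigma> = {}")
    case False
    then obtain x where x: "x \<in> \<sigma>" by blast
    then have "\<sigma> = {x}" using eq by blast
    moreover have "x = 1 \<or> x = 2 \<or> x = 3" using x s by auto
    ultimately show ?thesis by auto
  qed simp
next
  assume "\<sigma> = {} \<or> \<sigma> = {1} \<or> \<sigma> = {2} \<or> \<sigma> = {3::nat}"
  then show "\<sigma> \<in> F3" by (auto simp: indep_complex_def tp_adj_def F3_def)
qed

lemma idx3: "{w. w \<notin> \<tau> \<and> insert w \<tau> \<in> F3} = (if \<tau> = {} then {1,2,3} else {})"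
  by (auto simp: F3_iff)

definition e1 :: "nat set \<Rightarrow> 'k::field" where
  "e1 = (\<lambda>\<tau>. if \<tau> = {1} then 1 else if \<tau> = {2} then -1 else 0)"
definition e2 :: "nat set \<Rightarrow> 'k::field" where
  "e2 = (\<lambda>\<tau>. if \<tau> = {2} then 1 else if \<tau> = {3} then -1 else 0)"

lemma sg_empty[simp]: "sg {} w = 1" by (simp add: sg_def)

lemma e1_Z: "(e1 :: nat set \<Rightarrow> 'k::field) \<in> {f \<in> chains (F3) 1. bd (F3) f = 0}"
proof -
  have "e1 \<in> (chains (F3) 1 :: (nat set \<Rightarrow> 'k) set)"
    by (auto simp: chains_def e1_def F3_iff split: if_splits)
  moreover have "bd (F3) (e1 :: nat set \<Rightarrow> 'k) = 0"
    by (rule ext) (simp add: bd_alt idx3 e1_def)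
  ultimately show ?thesis by simp
qed

lemma e2_Z: "(e2 :: nat set \<Rightarrow> 'k::field) \<in> {f \<in> chains (F3) 1. bd (F3) f = 0}"
proof -
  have "e2 \<in> (chains (F3) 1 :: (nat set \<Rightarrow> 'k) set)"
    by (auto simp: chains_def e2_def F3_iff split: if_splits)
  moreover have "bd (F3) (e2 :: nat set \<Rightarrow> 'k) = 0"
    by (rule ext) (simp add: bd_alt idx3 e2_def)
  ultimately show ?thesis by simp
qed

lemma e_indep: "fs.independent {e1 :: nat set \<Rightarrow> 'k::field, e2}"
proof -
  have ne: "(e1 :: nat set \<Rightarrow> 'k) \<noteq> e2"
  proof
    assume "(e1 :: nat set \<Rightarrow> 'k) = e2"
    then have "e1 {1} = (e2 {1} :: 'k)" by simp
    then show False by (simp add: e1_def e2_def)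
  qed
  have n2: "(e2 :: nat set \<Rightarrow> 'k) \<noteq> 0"
  proof
    assume "(e2 :: nat set \<Rightarrow> 'k) = 0"
    then have "e2 {2} = (0::'k)" by simp
    then show False by (simp add: e2_def)
  qed
  have sp: "(e1 :: nat set \<Rightarrow> 'k) \<notin> fs.span {e2}"
  proof
    assume "(e1 :: nat set \<Rightarrow> 'k) \<in> fs.span {e2}"
    then obtain c where "e1 = fscale c (e2 :: nat set \<Rightarrow> 'k)" unfolding fs.span_singleton by blast
    then have "e1 {1} = (fscale c (e2 :: nat set \<Rightarrow> 'k)) {1}" by simp
    then show False by (simp add: e1_def e2_def fscale_def)
  qed
  show ?thesis using ne n2 sp by (simp add: fs.independent_insert fs.dependent_single)
qed

lemma lower3: "2 \<le> total_red_betti TYPE('k::field) {1..3} tp_adj"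
proof -
  let ?F = "F3"
  let ?Z = "{f \<in> (chains ?F 1 :: (nat set \<Rightarrow> 'k) set). bd ?F f = 0}"
  let ?B = "bd ?F ` (chains ?F (Suc 1) :: (nat set \<Rightarrow> 'k) set)"
  have cx: "cplx {1..3} ?F" unfolding F3_def by (rule cplx_indep) simp
  have ne: "(e1 :: nat set \<Rightarrow> 'k) \<noteq> e2"
  proof
    assume "(e1 :: nat set \<Rightarrow> 'k) = e2"
    then have "e1 {1} = (e2 {1} :: 'k)" by simp
    then show False by (simp add: e1_def e2_def)
  qed
  have "card {e1 :: nat set \<Rightarrow> 'k, e2} \<le> fs.dim ?Z"
    by (rule fs.card_le_dim_fd[OF e_indep]) (use e1_Z e2_Z chains_span[OF cplx_finite[OF cx]] cplx_finite[OF cx] in auto)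
  then have Z2: "2 \<le> fs.dim ?Z" using ne by simp
  have "(chains ?F (Suc 1) :: (nat set \<Rightarrow> 'k) set) \<subseteq> {0}"
  proof
    fix f :: "nat set \<Rightarrow> 'k" assume f: "f \<in> chains ?F (Suc 1)"
    have "f \<sigma> = 0" for \<sigma>
    proof (rule ccontr)
      assume "f \<sigma> \<noteq> 0"
      then have "\<sigma> \<in> F3" "card \<sigma> = 2" using f by (auto simp: chains_def)
      then show False by (auto simp: F3_iff)
    qed
    then show "f \<in> {0}" by (auto simp: fun_eq_iff)
  qed
  then have "?B \<subseteq> fs.span ({} :: (nat set \<Rightarrow> 'k) set)" by auto
  then have "fs.dim ?B \<le> card ({} :: (nat set \<Rightarrow> 'k) set)" by (rule fs.dim_le_card) simp
  then have r: "2 \<le> red_betti TYPE('k) ?F 1" using Z2 by (simp add: red_betti_def)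
  have "red_betti TYPE('k) ?F 1 \<le> total_red_betti TYPE('k) {1..3} tp_adj"
    unfolding total_red_betti_def F3_def by (rule member_le_sum) auto
  then show ?thesis using r by simp
qed

theorem lemmaA20:
  shows "(\<forall>n::nat. n \<noteq> 3 \<longrightarrow>
            real (total_red_betti TYPE('k::field) {1..n} tp_adj) \<le> 2 powr (real n / 4))
         \<and> total_red_betti TYPE('k::field) {1..3} tp_adj = 2"
proof (intro conjI allI impI)
  fix n :: nat assume "n \<noteq> 3"
  then have "real (T TYPE('k) 0 n) \<le> 2 powr (real n / 4)" by (rule Tbound)
  then show "real (total_red_betti TYPE('k) {1..n} tp_adj) \<le> 2 powr (real n / 4)" by simp
next
  have "T TYPE('k) 0 3 \<le> 2" by (rule T3)
  then have "total_red_betti TYPE('k) {1..3} tp_adj \<le> 2" by simp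
  then show "total_red_betti TYPE('k) {1..3} tp_adj = 2" using lower3[where 'k='k] by simp
qed

end
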